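(* Let $n\ge1$, $X=\{1,\dots,n\}$, $\mathcal{A}$ the algebra of all functions $X\to\mathbb{R}$ with pointwise operations, $\sigma:X\to X$ a bijection and $\tilde{\sigma}(f)=f\circ\sigma^{-1}$. The centralizer of $\mathcal{A}$ in the skew-Laurent ring $\mathcal{A}[x,x^{-1};\tilde{\sigma}]$ is $$C(\mathcal{A})=\Big\{\sum_{n\in\mathbb{Z}} f_nx^n : f_n\in\mathcal{A},\ f_n=0\text{ for all but finitely many } n,\ f_n=0\text{ on } Sep^n(X)\text{ for all } n\Big\}.$$
   Context: The skew-Laurent ring $\mathcal{A}[x,x^{-1};\tilde{\sigma}]$ is the ring containing $\mathcal{A}$ as a subring and an invertible element $x$ such that it is a free left $\mathcal{A}$-module with basis $\{x^n:n\in\mathbb{Z}\}$ and $xf=\tilde{\sigma}(f)x$, $x^{-1}f=\tilde{\sigma}^{-1}(f)x^{-1}$ for all $f\in\mathcal{A}$. For an integer $n$, $Sep^n(X)=\{p\in X:\sigma^n(p)\neq p\}$ (so $Sep^0(X)=\emptyset$). *)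

theory Defs
  imports Complex_Main
begin

text \<open>X = {1..N}; the algebra A of real functions on X is represented by
  functions nat => real vanishing outside X.\<close>

definition Alg :: "nat \<Rightarrow> (nat \<Rightarrow> real) set" where
  "Alg N = {f. \<forall>i. i \<notin> {1..N} \<longrightarrow> f i = 0}"

definition spow :: "(nat \<Rightarrow> nat) \<Rightarrow> nat \<Rightarrow> int \<Rightarrow> nat \<Rightarrow> nat" where
  "spow \<sigma> N m p = (if m \<ge> 0 then (\<sigma> ^^ nat m) p
                     else (inv_into {1..N} \<sigma> ^^ nat (- m)) p)"

definition stilde_pow :: "(nat \<Rightarrow> nat) \<Rightarrow> nat \<Rightarrow> int \<Rightarrow> (nat \<Rightarrow> real) \<Rightarrow> (nat \<Rightarrow> real)" where
  "stilde_pow \<sigma> N m g = (\<lambda>p. if p \<in> {1..N} then g (spow \<sigma> N (- m) p) else 0)"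

text \<open>Elements of the skew-Laurent ring: finitely supported coefficient families
  (a m is the coefficient of x^m).\<close>
definition LR :: "nat \<Rightarrow> (int \<Rightarrow> nat \<Rightarrow> real) set" where
  "LR N = {a. finite {m. a m \<noteq> (\<lambda>_. 0)} \<and> (\<forall>m. a m \<in> Alg N)}"

text \<open>Multiplication: (a_m x^m)(b_j x^j) = a_m tilde-sigma^m(b_j) x^(m+j).\<close>
definition lmult :: "(nat \<Rightarrow> nat) \<Rightarrow> nat \<Rightarrow> (int \<Rightarrow> nat \<Rightarrow> real) \<Rightarrow> (int \<Rightarrow> nat \<Rightarrow> real)
                     \<Rightarrow> (int \<Rightarrow> nat \<Rightarrow> real)" where
  "lmult \<sigma> N a b = (\<lambda>k p. \<Sum>m\<in>{m. a m \<noteq> (\<lambda>_. 0)}. a m p * stilde_pow \<sigma> N m (b (k - m)) p)"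

definition lconst :: "(nat \<Rightarrow> real) \<Rightarrow> (int \<Rightarrow> nat \<Rightarrow> real)" where
  "lconst f = (\<lambda>k. if k = 0 then f else (\<lambda>_. 0))"

definition centralizer :: "(nat \<Rightarrow> nat) \<Rightarrow> nat \<Rightarrow> (int \<Rightarrow> nat \<Rightarrow> real) set" where
  "centralizer \<sigma> N = {a \<in> LR N. \<forall>f \<in> Alg N. lmult \<sigma> N a (lconst f) = lmult \<sigma> N (lconst f) a}"

definition Sep :: "(nat \<Rightarrow> nat) \<Rightarrow> nat \<Rightarrow> int \<Rightarrow> nat set" where
  "Sep \<sigma> N m = {p \<in> {1..N}. spow \<sigma> N m p \<noteq> p}"

end

theory Submission
  imports Defs
begin

lemma iter_facts:
  assumes b: "bij_betw \<sigma> {1..N} {1..N}"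
  shows "p \<in> {1..N} \<Longrightarrow> (\<sigma>^^n) p \<in> {1..N} \<and> (inv_into {1..N} \<sigma> ^^ n) p \<in> {1..N}
     \<and> (\<sigma>^^n) ((inv_into {1..N} \<sigma> ^^ n) p) = p \<and> (inv_into {1..N} \<sigma> ^^ n) ((\<sigma>^^n) p) = p"
proof (induction n arbitrary: p)
  case 0
  then show ?case by simp
next
  case (Suc n)
  let ?t = "inv_into {1..N} \<sigma>"
  have bt: "bij_betw ?t {1..N} {1..N}" using b by (simp add: bij_betw_inv_into)
  have r1: "\<sigma> (?t q) = q" if "q \<in> {1..N}" for q using that b bij_betw_inv_into_right by fastforce
  have r2: "?t (\<sigma> q) = q" if "q \<in> {1..N}" for q using that b bij_betw_inv_into_left by fastforce
  have s1: "\<sigma> q \<in> {1..N}" if "q \<in> {1..N}" for q using that b bij_betwE by blast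
  have t1: "?t q \<in> {1..N}" if "q \<in> {1..N}" for q using that bt bij_betwE by blast
  have tn: "(?t ^^ n) p \<in> {1..N}" "(\<sigma> ^^ n) p \<in> {1..N}" using Suc.IH[OF Suc.prems] by auto
  have A: "(\<sigma>^^Suc n) ((?t ^^ Suc n) p) = p"
  proof -
    have "(\<sigma>^^Suc n) ((?t ^^ Suc n) p) = (\<sigma>^^n) (\<sigma> (?t ((?t ^^ n) p)))"
      by (simp only: funpow_Suc_right[of n \<sigma>] comp_apply funpow.simps(2)[of n ?t])
    also have "\<dots> = p" using r1[OF tn(1)] Suc.IH[OF Suc.prems] by simp
    finally show ?thesis .
  qed
  have B: "(?t^^Suc n) ((\<sigma> ^^ Suc n) p) = p"
  proof -
    have "(?t^^Suc n) ((\<sigma> ^^ Suc n) p) = (?t^^n) (?t (\<sigma> ((\<sigma> ^^ n) p)))"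
      by (simp only: funpow_Suc_right[of n ?t] comp_apply funpow.simps(2)[of n \<sigma>])
    also have "\<dots> = p" using r2[OF tn(2)] Suc.IH[OF Suc.prems] by simp
    finally show ?thesis .
  qed
  show ?case using A B Suc.IH[OF Suc.prems] s1 t1 by simp
qed

lemma fix_iff:
  assumes b: "bij_betw \<sigma> {1..N} {1..N}" and p: "p \<in> {1..N}"
  shows "((\<sigma>^^n) p = p) = ((inv_into {1..N} \<sigma> ^^ n) p = p)"
  using iter_facts[OF b p, of n] by metis

lemma spow_neg:
  assumes b: "bij_betw \<sigma> {1..N} {1..N}" and p: "p \<in> {1..N}"
  shows "(spow \<sigma> N (- k) p = p) = (spow \<sigma> N k p = p)"
  using fix_iff[OF b p] unfolding spow_def
  by (cases "k = 0") auto

lemma spow_in: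
  assumes b: "bij_betw \<sigma> {1..N} {1..N}" and p: "p \<in> {1..N}"
  shows "spow \<sigma> N k p \<in> {1..N}"
  using iter_facts[OF b p] unfolding spow_def by auto

lemma lmult_right:
  assumes "a \<in> LR N"
  shows "lmult \<sigma> N a (lconst f) k p = a k p * stilde_pow \<sigma> N k f p"
proof -
  have fin: "finite {m. a m \<noteq> (\<lambda>_. 0)}" using assms by (simp add: LR_def)
  have z: "stilde_pow \<sigma> N m (\<lambda>_. 0) p = 0" for m by (simp add: stilde_pow_def)
  have "lmult \<sigma> N a (lconst f) k p =
     (\<Sum>m\<in>{m. a m \<noteq> (\<lambda>_. 0)}. if m = k then a k p * stilde_pow \<sigma> N k f p else 0)"
    unfolding lmult_def lconst_def by (rule sum.cong) (auto simp: z)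
  also have "\<dots> = a k p * stilde_pow \<sigma> N k f p"
    using fin by (auto simp: sum.delta)
  finally show ?thesis .
qed

lemma lmult_left:
  assumes "a \<in> LR N"
  shows "lmult \<sigma> N (lconst f) a k p = f p * stilde_pow \<sigma> N 0 (a k) p"
proof (cases "f = (\<lambda>_. 0)")
  case True
  then show ?thesis unfolding lmult_def lconst_def by simp
next
  case False
  have "{m. lconst f m \<noteq> (\<lambda>_. 0)} = {0}" using False by (auto simp: lconst_def)
  then show ?thesis unfolding lmult_def by (simp add: lconst_def)
qed

theorem theorem12:
  fixes N :: nat and \<sigma> :: "nat \<Rightarrow> nat"
  assumes "N \<ge> 1" and "bij_betw \<sigma> {1..N} {1..N}"
  shows "centralizer \<sigma> N = {a \<in> LR N. \<forall>m. \<forall>p \<in> Sep \<sigma> N m. a m p = 0}"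
proof -
  note b = assms(2)
  have s0: "spow \<sigma> N 0 p = p" for p by (simp add: spow_def)
  have key: "(\<forall>f \<in> Alg N. lmult \<sigma> N a (lconst f) = lmult \<sigma> N (lconst f) a)
      = (\<forall>m. \<forall>p \<in> Sep \<sigma> N m. a m p = 0)" if a: "a \<in> LR N" for a
  proof -
    have aout: "p \<notin> {1..N} \<Longrightarrow> a k p = 0" for k p using a by (auto simp: LR_def Alg_def)
    have eq: "lmult \<sigma> N a (lconst f) k p = lmult \<sigma> N (lconst f) a k p \<longleftrightarrow>
        (p \<in> {1..N} \<longrightarrow> a k p * f (spow \<sigma> N (- k) p) = f p * a k p)" for f k p
      unfolding lmult_right[OF a] lmult_left[OF a] stilde_pow_def
      using aout by (auto simp: s0)
    show ?thesis
    proof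
      assume H: "\<forall>f \<in> Alg N. lmult \<sigma> N a (lconst f) = lmult \<sigma> N (lconst f) a"
      show "\<forall>m. \<forall>p \<in> Sep \<sigma> N m. a m p = 0"
      proof (intro allI ballI)
        fix m p assume "p \<in> Sep \<sigma> N m"
        hence p: "p \<in> {1..N}" and ne: "spow \<sigma> N m p \<noteq> p" by (auto simp: Sep_def)
        have ne2: "spow \<sigma> N (- m) p \<noteq> p" using ne spow_neg[OF b p] by simp
        define f where "f = (\<lambda>q. if q = p then (1::real) else 0)"
        have "f \<in> Alg N" using p by (auto simp: f_def Alg_def)
        hence "lmult \<sigma> N a (lconst f) m p = lmult \<sigma> N (lconst f) a m p" using H by simp
        hence "a m p * f (spow \<sigma> N (- m) p) = f p * a m p" using eq p by blast
        thus "a m p = 0" using ne2 by (simp add: f_def)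
      qed
    next
      assume H: "\<forall>m. \<forall>p \<in> Sep \<sigma> N m. a m p = 0"
      show "\<forall>f \<in> Alg N. lmult \<sigma> N a (lconst f) = lmult \<sigma> N (lconst f) a"
      proof (intro ballI ext)
        fix f k p
        show "lmult \<sigma> N a (lconst f) k p = lmult \<sigma> N (lconst f) a k p"
          unfolding eq
        proof
          assume p: "p \<in> {1..N}"
          show "a k p * f (spow \<sigma> N (- k) p) = f p * a k p"
          proof (cases "spow \<sigma> N k p = p")
            case True
            then have "spow \<sigma> N (- k) p = p" using spow_neg[OF b p] by simp
            then show ?thesis by simp
          next
            case False
            then have "p \<in> Sep \<sigma> N k" using p by (simp add: Sep_def)
            then show ?thesis using H by simp
          qed
        qed
      qed
    qed
  qed
  show ?thesis unfolding centralizer_def using key by blast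
qed

end
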